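(* Let $A=(a_{ij})\in\mathbb R^{d\times d}_+$ have entries summing to $1$ and positive row sums $r(A)_i=\sum_ja_{ij}$, and let $p\in\Sigma_d$. Define $\tilde A\in\mathbb R^{d\times d}_+$ by $\tilde A_{ij}=\frac1z a_{ij}\sqrt{p_i/r(A)_i}$, where $z>0$ is chosen so that the entries of $\tilde A$ sum to $1$. Then $\|c(\tilde A)-c(A)\|_1\le\|r(\tilde A)-r(A)\|_1$.
   Context: For a matrix $M$, $r(M)$ is its vector of row sums and $c(M)$ its vector of column sums; $\Sigma_d$ is the probability simplex in $\mathbb R^d$; $\|\cdot\|_1$ is the $\ell_1$ norm. *)

theory Defs
  imports Main "HOL-Analysis.Analysis"
begin

text \<open>Square d x d matrices are functions on a finite index type 'n (d = CARD('n)).\<close>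

definition row_sums :: "('n::finite \<Rightarrow> 'n \<Rightarrow> real) \<Rightarrow> 'n \<Rightarrow> real" where
  "row_sums M i = (\<Sum>j\<in>UNIV. M i j)"

definition col_sums :: "('n::finite \<Rightarrow> 'n \<Rightarrow> real) \<Rightarrow> 'n \<Rightarrow> real" where
  "col_sums M j = (\<Sum>i\<in>UNIV. M i j)"

definition l1_dist :: "('n::finite \<Rightarrow> real) \<Rightarrow> ('n \<Rightarrow> real) \<Rightarrow> real" where
  "l1_dist u v = (\<Sum>i\<in>UNIV. \<bar>u i - v i\<bar>)"

definition prob_simplex :: "('n::finite \<Rightarrow> real) set" where
  "prob_simplex = {p. (\<forall>i. p i \<ge> 0) \<and> (\<Sum>i\<in>UNIV. p i) = 1}"

end

theory Submission
  imports Defs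
begin

theorem lemma6:
  fixes A :: "'n::finite \<Rightarrow> 'n \<Rightarrow> real" and p :: "'n \<Rightarrow> real" and z :: real
    and At :: "'n \<Rightarrow> 'n \<Rightarrow> real"
  assumes nonneg: "\<And>i j. A i j \<ge> 0"
    and total: "(\<Sum>i\<in>UNIV. \<Sum>j\<in>UNIV. A i j) = 1"
    and rpos: "\<And>i. row_sums A i > 0"
    and p: "p \<in> prob_simplex"
    and At_def: "\<And>i j. At i j = (1 / z) * A i j * sqrt (p i / row_sums A i)"
    and zpos: "z > 0"
    and znorm: "(\<Sum>i\<in>UNIV. \<Sum>j\<in>UNIV. At i j) = 1"
  shows "l1_dist (col_sums At) (col_sums A) \<le> l1_dist (row_sums At) (row_sums A)"
proof -
  define w where "w i = (1 / z) * sqrt (p i / row_sums A i)" for i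
  have D: "At i j - A i j = A i j * (w i - 1)" for i j
    by (simp add: At_def w_def algebra_simps)
  have rowi: "(\<Sum>j\<in>UNIV. \<bar>At i j - A i j\<bar>) = \<bar>row_sums At i - row_sums A i\<bar>" for i
  proof -
    have "(\<Sum>j\<in>UNIV. \<bar>At i j - A i j\<bar>) = (\<Sum>j\<in>UNIV. A i j) * \<bar>w i - 1\<bar>"
      by (simp add: D abs_mult nonneg sum_distrib_right)
    also have "\<dots> = \<bar>(\<Sum>j\<in>UNIV. A i j) * (w i - 1)\<bar>"
      using sum_nonneg[of UNIV "A i"] nonneg by (simp add: abs_mult)
    also have "(\<Sum>j\<in>UNIV. A i j) * (w i - 1) = row_sums At i - row_sums A i"
      by (simp add: row_sums_def sum_subtractf[symmetric] D sum_distrib_right)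
    finally show ?thesis .
  qed
  have "l1_dist (col_sums At) (col_sums A) = (\<Sum>j\<in>UNIV. \<bar>\<Sum>i\<in>UNIV. At i j - A i j\<bar>)"
    by (simp add: l1_dist_def col_sums_def sum_subtractf)
  also have "\<dots> \<le> (\<Sum>j\<in>UNIV. \<Sum>i\<in>UNIV. \<bar>At i j - A i j\<bar>)"
    by (rule sum_mono) (rule sum_abs)
  also have "\<dots> = (\<Sum>i\<in>UNIV. \<Sum>j\<in>UNIV. \<bar>At i j - A i j\<bar>)"
    by (rule sum.swap)
  also have "\<dots> = l1_dist (row_sums At) (row_sums A)"
    by (simp add: l1_dist_def rowi)
  finally show ?thesis .
qed

end
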